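(* For discrete models over $K$ timesteps, assuming that $\theta^\star_{Tt}>0$ and $\theta^\star_{Ct}>0$ for all $t$, the solution $(\theta_{T}^\star, \theta_{C}^\star)$ is the only stationary point of the multi-player inverse-weighted Brier score game for times $t \in \{1,\ldots,K-1\}$. This game has $2(K-1)$ players: for each $t \in \{1,\ldots,K-1\}$, the $t$-th failure player controls only $\theta_{Tt}$ and minimizes $\ell_F^t(\theta)$, and the $t$-th censor player controls only $\theta_{Ct}$ and minimizes $\ell_G^t(\theta)$. Here $$\ell_{F}^t(\theta)=\mathbb{E}\Big[\frac{\overline{F}_{\theta_T}(t)^2\,\Delta\,\mathbb{1}\{U \leq t\}}{\overline{G}_{\theta_C}(U^{-})}+\frac{F_{\theta_T}(t)^2\,\mathbb{1}\{U > t\}}{\overline{G}_{\theta_C}(t)}\Big],$$ $$\ell_{G}^t(\theta)=\mathbb{E}\Big[\frac{\overline{G}_{\theta_C}(t)^2\,(1-\Delta)\,\mathbb{1}\{U \leq t\}}{\overline{F}_{\theta_T}(U)}+\frac{G_{\theta_C}(t)^2\,\mathbb{1}\{U > t\}}{\overline{F}_{\theta_T}(t)}\Big].$$ A stationary point is a $(\theta_T,\theta_C)$ at which $\partial \ell_F^t/\partial \theta_{Tt}=0$ and $\partial \ell_G^t/\partial \theta_{Ct}=0$ for all $t \in \{1,\ldots,K-1\}$.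
   Context: Let $T$ be a failure time and $C$ a censoring time, both taking values in discrete times $\{1,\ldots,K\}$, with $T$ independent of $C$ (marginal models, no covariates). One observes $U=\min(T,C)$ and $\Delta=\mathbb{1}\{T \leq C\}$; expectations are over the true data-generating distribution of $(T,C)$. The failure model has parameters $\theta_T=(\theta_{T1},\ldots,\theta_{T(K-1)})$ with $\theta_{Tt}=P_\theta(T=t)$, $\theta_{TK}=1-\sum_{t<K}\theta_{Tt}$, CDF $F_{\theta_T}(t)=\sum_{k=1}^t \theta_{Tk}$ and survival function $\overline{F}_{\theta_T}=1-F_{\theta_T}$; likewise the censoring model has $\theta_{Ct}=P_\theta(C=t)$, CDF $G_{\theta_C}$, $\overline{G}_{\theta_C}=1-G_{\theta_C}$, and $\overline{G}_{\theta_C}(t^-)=P_\theta(C\geq t)$. $\theta^\star_T,\theta^\star_C$ denote the parameters of the true failure and censoring distributions. The losses are inverse-probability-of-censoring-weighted Brier scores at time $t$ where the true weighting distribution is replaced by the other player's model. *)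

theory Defs
  imports "HOL-Analysis.Analysis"
begin

text \<open>Discrete model on times 1..K, parametrised by the first K-1 probabilities
  th 1, ..., th (K-1); the mass at K is 1 minus their sum.  Only the values of
  th on 1..K-1 are used.\<close>

definition dpmf :: "nat \<Rightarrow> (nat \<Rightarrow> real) \<Rightarrow> nat \<Rightarrow> real" where
  "dpmf K th k = (if k < K then th k else 1 - (\<Sum>j=1..K-1. th j))"

definition dcdf :: "nat \<Rightarrow> (nat \<Rightarrow> real) \<Rightarrow> nat \<Rightarrow> real" where
  "dcdf K th t = (\<Sum>k=1..t. dpmf K th k)"

definition dsurv :: "nat \<Rightarrow> (nat \<Rightarrow> real) \<Rightarrow> nat \<Rightarrow> real" where
  "dsurv K th t = 1 - dcdf K th t"

text \<open>Left limit of the survival function:  P(C >= u) = 1 - G(u - 1).\<close>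
definition dsurv_minus :: "nat \<Rightarrow> (nat \<Rightarrow> real) \<Rightarrow> nat \<Rightarrow> real" where
  "dsurv_minus K th u = 1 - dcdf K th (u - 1)"

definition valid_param :: "nat \<Rightarrow> (nat \<Rightarrow> real) \<Rightarrow> bool" where
  "valid_param K th \<longleftrightarrow> (\<forall>k\<in>{1..K}. dpmf K th k > 0)"

text \<open>Expectation of h(U, Delta) under the true independent T ~ thsT, C ~ thsC,
  where U = min T C and Delta = [T <= C].\<close>
definition expect_obs ::
  "nat \<Rightarrow> (nat \<Rightarrow> real) \<Rightarrow> (nat \<Rightarrow> real) \<Rightarrow> (nat \<Rightarrow> bool \<Rightarrow> real) \<Rightarrow> real" where
  "expect_obs K thsT thsC h =
     (\<Sum>i=1..K. \<Sum>j=1..K. dpmf K thsT i * dpmf K thsC j * h (min i j) (i \<le> j))"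

definition ind :: "bool \<Rightarrow> real" where
  "ind b = (if b then 1 else 0)"

definition lossF ::
  "nat \<Rightarrow> (nat \<Rightarrow> real) \<Rightarrow> (nat \<Rightarrow> real) \<Rightarrow> nat \<Rightarrow> (nat \<Rightarrow> real) \<Rightarrow> (nat \<Rightarrow> real) \<Rightarrow> real" where
  "lossF K thsT thsC t thT thC =
     expect_obs K thsT thsC (\<lambda>U D.
        (dsurv K thT t)^2 * ind D * ind (U \<le> t) / dsurv_minus K thC U
      + (dcdf K thT t)^2 * ind (U > t) / dsurv K thC t)"

definition lossG ::
  "nat \<Rightarrow> (nat \<Rightarrow> real) \<Rightarrow> (nat \<Rightarrow> real) \<Rightarrow> nat \<Rightarrow> (nat \<Rightarrow> real) \<Rightarrow> (nat \<Rightarrow> real) \<Rightarrow> real" where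
  "lossG K thsT thsC t thT thC =
     expect_obs K thsT thsC (\<lambda>U D.
        (dsurv K thC t)^2 * (1 - ind D) * ind (U \<le> t) / dsurv K thT U
      + (dcdf K thC t)^2 * ind (U > t) / dsurv K thT t)"

definition stationary ::
  "nat \<Rightarrow> (nat \<Rightarrow> real) \<Rightarrow> (nat \<Rightarrow> real) \<Rightarrow> (nat \<Rightarrow> real) \<Rightarrow> (nat \<Rightarrow> real) \<Rightarrow> bool" where
  "stationary K thsT thsC thT thC \<longleftrightarrow>
     (\<forall>t\<in>{1..K-1}.
        ((\<lambda>x. lossF K thsT thsC t (thT(t := x)) thC) has_real_derivative 0) (at (thT t))
      \<and> ((\<lambda>x. lossG K thsT thsC t thT (thC(t := x))) has_real_derivative 0) (at (thC t)))"

end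

theory Submission
  imports Defs
begin

lemma H1: "1 \<le> (i::nat) \<Longrightarrow> (\<Sum>j=1..K. if i \<le> j then f j else 0) = (\<Sum>j=i..K. (f j::real))"
proof -
  assume "1 \<le> i"
  then have "{j\<in>{1..K}. i \<le> j} = {i..K}" by auto
  then show ?thesis by (metis (no_types) sum.inter_filter finite_atLeastAtMost)
qed

lemma H2: "(t::nat) \<le> K \<Longrightarrow> (\<Sum>i=1..K. if i \<le> t then f i else 0) = (\<Sum>i=1..t. (f i::real))"
proof -
  assume "t \<le> K"
  then have "{j\<in>{1..K}. j \<le> t} = {1..t}" by auto
  then show ?thesis by (metis (no_types) sum.inter_filter finite_atLeastAtMost)
qed

lemma H3: "(\<Sum>i=1..K. if (t::nat) < i then f i else 0) = (\<Sum>i=t+1..K. (f i::real))"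
proof -
  have "{j\<in>{1..K}. t < j} = {t+1..K}" by auto
  then show ?thesis by (metis (no_types) sum.inter_filter finite_atLeastAtMost)
qed

lemma E1: "t \<le> K \<Longrightarrow> expect_obs K a b (\<lambda>U D. ind D * ind (U \<le> t) * h U)
   = (\<Sum>i=1..t. dpmf K a i * (\<Sum>j=i..K. dpmf K b j) * h i)"
proof -
  assume tK: "t \<le> K"
  have "expect_obs K a b (\<lambda>U D. ind D * ind (U \<le> t) * h U)
     = (\<Sum>i=1..K. \<Sum>j=1..K. if i \<le> j then dpmf K b j * (if i \<le> t then dpmf K a i * h i else 0) else 0)"
    unfolding expect_obs_def by (intro sum.cong refl) (auto simp: ind_def min_def)
  also have "\<dots> = (\<Sum>i=1..K. (\<Sum>j=i..K. dpmf K b j) * (if i \<le> t then dpmf K a i * h i else 0))"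
  proof (intro sum.cong refl)
    fix i assume "i \<in> {1..K}"
    then show "(\<Sum>j=1..K. if i \<le> j then dpmf K b j * (if i \<le> t then dpmf K a i * h i else 0) else 0)
      = (\<Sum>j=i..K. dpmf K b j) * (if i \<le> t then dpmf K a i * h i else 0)"
      using H1[where i=i and K=K and f="\<lambda>j. dpmf K b j * (if i \<le> t then dpmf K a i * h i else 0)"]
      by (simp add: sum_distrib_right)
  qed
  also have "\<dots> = (\<Sum>i=1..K. if i \<le> t then dpmf K a i * (\<Sum>j=i..K. dpmf K b j) * h i else 0)"
    by (intro sum.cong refl) auto
  also have "\<dots> = (\<Sum>i=1..t. dpmf K a i * (\<Sum>j=i..K. dpmf K b j) * h i)"
    using tK by (rule H2)
  finally show ?thesis .
qed

lemma E2: "expect_obs K a b (\<lambda>U D. ind (t < U) * c)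
   = c * (\<Sum>i=t+1..K. dpmf K a i) * (\<Sum>j=t+1..K. dpmf K b j)"
proof -
  have "expect_obs K a b (\<lambda>U D. ind (t < U) * c)
     = (\<Sum>i=1..K. if t < i then dpmf K a i * (\<Sum>j=1..K. if t < j then dpmf K b j * c else 0) else 0)"
    unfolding expect_obs_def by (intro sum.cong refl) (auto simp: ind_def sum_distrib_left intro!: sum.cong)
  also have "\<dots> = (\<Sum>i=1..K. if t < i then dpmf K a i * (c * (\<Sum>j=t+1..K. dpmf K b j)) else 0)"
  proof -
    have "(\<Sum>j=1..K. if t < j then dpmf K b j * c else 0) = (\<Sum>j=t+1..K. dpmf K b j * c)"
      by (rule H3)
    also have "\<dots> = c * (\<Sum>j=t+1..K. dpmf K b j)" by (simp add: sum_distrib_left mult.commute)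
    finally have eq: "(\<Sum>j=1..K. if t < j then dpmf K b j * c else 0) = c * (\<Sum>j=t+1..K. dpmf K b j)" .
    show ?thesis by (simp only: eq)
  qed
  also have "\<dots> = (\<Sum>i=t+1..K. dpmf K a i * (c * (\<Sum>j=t+1..K. dpmf K b j)))"
    by (rule H3)
  also have "\<dots> = c * (\<Sum>i=t+1..K. dpmf K a i) * (\<Sum>j=t+1..K. dpmf K b j)"
    by (simp only: sum_distrib_right sum_distrib_left mult_ac)
  finally show ?thesis .
qed

lemma E3: "t \<le> K \<Longrightarrow> expect_obs K a b (\<lambda>U D. (1 - ind D) * ind (U \<le> t) * h U)
   = (\<Sum>j=1..t. dpmf K b j * (\<Sum>i=j+1..K. dpmf K a i) * h j)"
proof -
  assume tK: "t \<le> K"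
  have "expect_obs K a b (\<lambda>U D. (1 - ind D) * ind (U \<le> t) * h U)
     = (\<Sum>i=1..K. \<Sum>j=1..K. if j < i then dpmf K a i * (if j \<le> t then dpmf K b j * h j else 0) else 0)"
    unfolding expect_obs_def by (intro sum.cong refl) (auto simp: ind_def min_def)
  also have "\<dots> = (\<Sum>j=1..K. \<Sum>i=1..K. if j < i then dpmf K a i * (if j \<le> t then dpmf K b j * h j else 0) else 0)"
    by (rule sum.swap)
  also have "\<dots> = (\<Sum>j=1..K. (\<Sum>i=j+1..K. dpmf K a i) * (if j \<le> t then dpmf K b j * h j else 0))"
  proof (intro sum.cong refl)
    fix j assume "j \<in> {1..K}"
    show "(\<Sum>i=1..K. if j < i then dpmf K a i * (if j \<le> t then dpmf K b j * h j else 0) else 0)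
      = (\<Sum>i=j+1..K. dpmf K a i) * (if j \<le> t then dpmf K b j * h j else 0)"
      using H3[where K=K and t=j and f="\<lambda>i. dpmf K a i * (if j \<le> t then dpmf K b j * h j else 0)"]
      by (simp add: sum_distrib_right)
  qed
  also have "\<dots> = (\<Sum>j=1..K. if j \<le> t then dpmf K b j * (\<Sum>i=j+1..K. dpmf K a i) * h j else 0)"
    by (intro sum.cong refl) auto
  also have "\<dots> = (\<Sum>j=1..t. dpmf K b j * (\<Sum>i=j+1..K. dpmf K a i) * h j)"
    using tK by (rule H2)
  finally show ?thesis .
qed

lemma T0: "1 \<le> K \<Longrightarrow> (\<Sum>j=1..K. dpmf K th j) = 1"
proof -
  assume "1 \<le> K"
  then obtain m where K: "K = Suc m" by (cases K) auto
  have "(\<Sum>j=1..K. dpmf K th j) = (\<Sum>j=1..m. dpmf K th j) + dpmf K th K"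
    using K by simp
  also have "(\<Sum>j=1..m. dpmf K th j) = (\<Sum>j=1..m. th j)"
    using K by (intro sum.cong refl) (auto simp: dpmf_def)
  also have "dpmf K th K = 1 - (\<Sum>j=1..m. th j)" using K by (simp add: dpmf_def)
  finally show ?thesis by simp
qed

lemma dcdf_lt: "t < K \<Longrightarrow> dcdf K th t = (\<Sum>k=1..t. th k)"
  unfolding dcdf_def by (intro sum.cong refl) (auto simp: dpmf_def)

lemma T1: "t \<le> K \<Longrightarrow> 1 \<le> K \<Longrightarrow> (\<Sum>j=t+1..K. dpmf K th j) = dsurv K th t"
proof -
  assume a: "t \<le> K" "1 \<le> K"
  have u: "{1..K} = {1..t} \<union> {t+1..K}" using a by auto
  have "(\<Sum>j=1..K. dpmf K th j) = (\<Sum>j=1..t. dpmf K th j) + (\<Sum>j=t+1..K. dpmf K th j)"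
    unfolding u by (rule sum.union_disjoint) auto
  then show ?thesis using T0[OF a(2), of th] unfolding dsurv_def dcdf_def by simp
qed

lemma T2: "1 \<le> i \<Longrightarrow> i \<le> K \<Longrightarrow> (\<Sum>j=i..K. dpmf K th j) = dsurv_minus K th i"
  using T1[of "i-1" K th] by (simp add: dsurv_minus_def dsurv_def)

lemma dcdf_upd: "1 \<le> t \<Longrightarrow> t < K \<Longrightarrow> dcdf K (th(t:=x)) t = dcdf K th t - th t + x"
proof -
  assume a: "1 \<le> t" "t < K"
  then obtain m where t: "t = Suc m" by (cases t) auto
  have "dcdf K (th(t:=x)) t = (\<Sum>k=1..m. (th(t:=x)) k) + x" using a t by (simp add: dcdf_lt)
  also have "(\<Sum>k=1..m. (th(t:=x)) k) = (\<Sum>k=1..m. th k)" using t by (intro sum.cong refl) auto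
  finally show ?thesis using a t by (simp add: dcdf_lt)
qed

lemma dcdf_diff: "1 \<le> t \<Longrightarrow> dcdf K th t = dcdf K th (t-1) + dpmf K th t"
  by (cases t) (auto simp: dcdf_def)

lemma lin: "expect_obs K a b (\<lambda>U D. p * f U D + q * g U D) = p * expect_obs K a b f + q * expect_obs K a b g"
  unfolding expect_obs_def by (simp add: sum_distrib_left sum.distrib algebra_simps)

definition AF where "AF K a b t thC = (\<Sum>i=1..t. dpmf K a i * (\<Sum>j=i..K. dpmf K b j) * (1/dsurv_minus K thC i))"
definition BF where "BF K a b t thC = (1/dsurv K thC t) * (\<Sum>i=t+1..K. dpmf K a i) * (\<Sum>j=t+1..K. dpmf K b j)"
definition AG where "AG K a b t thT = (\<Sum>j=1..t. dpmf K b j * (\<Sum>i=j+1..K. dpmf K a i) * (1/dsurv K thT j))"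
definition BG where "BG K a b t thT = (1/dsurv K thT t) * (\<Sum>i=t+1..K. dpmf K a i) * (\<Sum>j=t+1..K. dpmf K b j)"

lemma lossF_dec: "t \<le> K \<Longrightarrow> lossF K a b t thT thC = (dsurv K thT t)^2 * AF K a b t thC + (dcdf K thT t)^2 * BF K a b t thC"
proof -
  assume tK: "t \<le> K"
  have "lossF K a b t thT thC = expect_obs K a b (\<lambda>U D. (dsurv K thT t)^2 * (ind D * ind (U \<le> t) * (1/dsurv_minus K thC U))
      + (dcdf K thT t)^2 * (ind (t < U) * (1/dsurv K thC t)))"
    unfolding lossF_def by (rule arg_cong[where f="expect_obs K a b"]) (auto simp: fun_eq_iff)
  also have "\<dots> = (dsurv K thT t)^2 * AF K a b t thC + (dcdf K thT t)^2 * BF K a b t thC"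
    unfolding lin E1[OF tK] E2 AF_def BF_def ..
  finally show ?thesis .
qed

lemma lossG_dec: "t \<le> K \<Longrightarrow> lossG K a b t thT thC = (dsurv K thC t)^2 * AG K a b t thT + (dcdf K thC t)^2 * BG K a b t thT"
proof -
  assume tK: "t \<le> K"
  have "lossG K a b t thT thC = expect_obs K a b (\<lambda>U D. (dsurv K thC t)^2 * ((1 - ind D) * ind (U \<le> t) * (1/dsurv K thT U))
      + (dcdf K thC t)^2 * (ind (t < U) * (1/dsurv K thT t)))"
    unfolding lossG_def by (rule arg_cong[where f="expect_obs K a b"]) (auto simp: fun_eq_iff)
  also have "\<dots> = (dsurv K thC t)^2 * AG K a b t thT + (dcdf K thC t)^2 * BG K a b t thT"
    unfolding lin E3[OF tK] E2 AG_def BG_def ..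
  finally show ?thesis .
qed

lemma deriv_iff:
  assumes "1 \<le> t" "t < K"
  shows "((\<lambda>x. (dsurv K (th(t:=x)) t)^2 * A + (dcdf K (th(t:=x)) t)^2 * B) has_real_derivative 0) (at (th t))
     \<longleftrightarrow> dsurv K th t * A = dcdf K th t * B"
proof -
  define c where "c = dcdf K th t - th t"
  have f: "(\<lambda>x. (dsurv K (th(t:=x)) t)^2 * A + (dcdf K (th(t:=x)) t)^2 * B)
      = (\<lambda>x. (1 - (c + x))^2 * A + (c + x)^2 * B)"
    using assms by (auto simp: fun_eq_iff dsurv_def dcdf_upd c_def)
  define D where "D = 2 * (1 - (c + th t)) * (-1) * A + 2 * (c + th t) * B"
  have d: "((\<lambda>x. (1 - (c + x))^2 * A + (c + x)^2 * B) has_real_derivative D) (at (th t))"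
    unfolding D_def by (auto intro!: derivative_eq_intros)
  have ct: "c + th t = dcdf K th t" by (simp add: c_def)
  show ?thesis unfolding f
  proof
    assume "((\<lambda>x. (1 - (c + x))^2 * A + (c + x)^2 * B) has_real_derivative 0) (at (th t))"
    then have "D = 0" using d DERIV_unique by blast
    then show "dsurv K th t * A = dcdf K th t * B" unfolding D_def ct dsurv_def by (simp add: algebra_simps)
  next
    assume "dsurv K th t * A = dcdf K th t * B"
    then have "D = 0" unfolding D_def ct dsurv_def by (simp add: algebra_simps)
    then show "((\<lambda>x. (1 - (c + x))^2 * A + (c + x)^2 * B) has_real_derivative 0) (at (th t))" using d by simp
  qed
qed

lemma alg:
  fixes x y f g gam c :: real
  assumes pos: "x > 0" "y > 0" "f > 0" "g > 0" "f < 1" "gam \<ge> 0" "c > 0" and s: "gam + c + g = 1"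
    and e1: "x * (1-f) = (1-x) * (1/y * f * g)"
    and e2: "y * (gam + c * f * (1/x)) = (1-y) * (1/x * f * g)"
  shows "x = f \<and> y = g"
proof -
  have E1: "x * (1-f) * y = (1-x) * f * g" using e1 pos by (simp add: field_simps)
  have E2: "y * (gam * x + c * f) = (1-y) * f * g" using e2 pos by (simp add: field_simps)
  define D where "D = (1-f)*y + f*g"
  have Dpos: "D > 0" using pos unfolding D_def by (simp add: add_pos_nonneg)
  have xD: "x * D = f * g" using E1 unfolding D_def by (simp add: algebra_simps)
  have cg: "1-gam = c+g" using s by simp
  have "f * (y*(gam*g + (1-gam)*D)) = f * (y*(gam*g + (c+g)*D))" by (simp only: cg)
  also have "\<dots> = y * gam * (f*g) + y*(c+g)*f*D" by (simp add: algebra_simps)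
  also have "\<dots> = D * (y * (gam * x + c * f)) + y*g*f*D" using xD by (simp add: algebra_simps)
  also have "\<dots> = D * (y * (gam * x + c * f) + y*g*f)" by (simp add: algebra_simps)
  also have "y * (gam * x + c * f) + y*g*f = f * g" using E2 by (simp add: algebra_simps)
  also have "D * (f * g) = D * f * g" by simp
  finally have "f * (y*(gam*g + (1-gam)*D)) = f * (g * D)" by (simp add: algebra_simps)
  then have Q: "y*(gam*g + (1-gam)*D) = g * D" using pos by simp
  define a where "a = (1-gam)*(1-f)"
  define b where "b = gam*g + (1-gam)*f*g - (1-f)*g"
  have a0: "a \<ge> 0" using pos s unfolding a_def by simp
  have qy: "a*y^2 + b*y - f*g^2 = 0" using Q unfolding a_def b_def D_def by (simp add: algebra_simps power2_eq_square)
  have qg: "a*g^2 + b*g - f*g^2 = 0" unfolding a_def b_def using s by (simp add: algebra_simps power2_eq_square)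
  have yg: "y = g"
  proof (rule ccontr)
    assume ne: "y \<noteq> g"
    have "(y - g) * (a*(y+g) + b) = 0" using qy qg by (simp add: algebra_simps power2_eq_square)
    then have hb: "b = - a*(y+g)" using ne by simp
    have "a*g^2 + b*g - f*g^2 = - a*y*g - f*g^2" unfolding hb by (simp add: algebra_simps power2_eq_square)
    moreover have "a*y*g \<ge> 0" using a0 pos by simp
    moreover have "f*g^2 > 0" using pos by simp
    ultimately show False using qg by linarith
  qed
  have "x * g = f * g" using xD unfolding D_def yg by (simp add: algebra_simps)
  then have "x = f" using pos by simp
  with yg show ?thesis by simp
qed

lemma stat_iff:
  assumes K: "1 \<le> K"
  shows "stationary K a b thT thC \<longleftrightarrow> (\<forall>t\<in>{1..K-1}.
     dsurv K thT t * AF K a b t thC = dcdf K thT t * BF K a b t thC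
   \<and> dsurv K thC t * AG K a b t thT = dcdf K thC t * BG K a b t thT)"
proof -
  have "(((\<lambda>x. lossF K a b t (thT(t := x)) thC) has_real_derivative 0) (at (thT t))
      \<and> ((\<lambda>x. lossG K a b t thT (thC(t := x))) has_real_derivative 0) (at (thC t)))
    \<longleftrightarrow> (dsurv K thT t * AF K a b t thC = dcdf K thT t * BF K a b t thC
   \<and> dsurv K thC t * AG K a b t thT = dcdf K thC t * BG K a b t thT)" if t: "t \<in> {1..K-1}" for t
  proof -
    have t1: "1 \<le> t" "t < K" "t \<le> K" using t K by auto
    have f1: "(\<lambda>x. lossF K a b t (thT(t := x)) thC) = (\<lambda>x. (dsurv K (thT(t:=x)) t)^2 * AF K a b t thC + (dcdf K (thT(t:=x)) t)^2 * BF K a b t thC)"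
      using lossF_dec[OF t1(3)] by auto
    have f2: "(\<lambda>x. lossG K a b t thT (thC(t := x))) = (\<lambda>x. (dsurv K (thC(t:=x)) t)^2 * AG K a b t thT + (dcdf K (thC(t:=x)) t)^2 * BG K a b t thT)"
      using lossG_dec[OF t1(3)] by auto
    show ?thesis unfolding f1 f2 deriv_iff[OF t1(1,2)] ..
  qed
  then show ?thesis unfolding stationary_def by blast
qed

lemma pos_surv: "\<forall>k\<in>{1..K}. dpmf K th k > 0 \<Longrightarrow> t < K \<Longrightarrow> dsurv K th t > 0"
  by (subst T1[symmetric]) (auto intro!: sum_pos)

lemma pos_sm: "\<forall>k\<in>{1..K}. dpmf K th k > 0 \<Longrightarrow> 1 \<le> i \<Longrightarrow> i \<le> K \<Longrightarrow> dsurv_minus K th i > 0"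
  by (subst T2[symmetric]) (auto intro!: sum_pos)

lemma AF_eval:
  assumes pT: "\<forall>k\<in>{1..K}. dpmf K a k > 0" and pC: "\<forall>k\<in>{1..K}. dpmf K b k > 0"
    and t: "t \<le> K" and eq: "\<forall>i\<in>{1..t}. dsurv_minus K thC i = dsurv_minus K b i"
  shows "AF K a b t thC = dcdf K a t"
  unfolding AF_def dcdf_def
proof (intro sum.cong refl)
  fix i assume i: "i \<in> {1..t}"
  then have "dsurv_minus K b i > 0" using pos_sm[OF pC] t by auto
  then show "dpmf K a i * sum (dpmf K b) {i..K} * (1 / dsurv_minus K thC i) = dpmf K a i"
    using i t eq T2[of i K b] by auto
qed

lemma BF_eval: "1 \<le> K \<Longrightarrow> t \<le> K \<Longrightarrow> BF K a b t thC = 1 / dsurv K thC t * dsurv K a t * dsurv K b t"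
  unfolding BF_def using T1[of t K a] T1[of t K b] by simp

lemma BG_eval: "1 \<le> K \<Longrightarrow> t \<le> K \<Longrightarrow> BG K a b t thT = 1 / dsurv K thT t * dsurv K a t * dsurv K b t"
  unfolding BG_def using T1[of t K a] T1[of t K b] by simp

lemma AG_eval:
  assumes pT: "\<forall>k\<in>{1..K}. dpmf K a k > 0" and K: "1 \<le> K"
    and t: "t < K" and eq: "\<forall>j\<in>{1..t}. dsurv K thT j = dsurv K a j"
  shows "AG K a b t thT = dcdf K b t"
  unfolding AG_def dcdf_def
proof (intro sum.cong refl)
  fix j assume j: "j \<in> {1..t}"
  then have "dsurv K a j > 0" using pos_surv[OF pT] t by auto
  then show "dpmf K b j * sum (dpmf K a) {j+1..K} * (1 / dsurv K thT j) = dpmf K b j"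
    using j t eq T1[of j K a] K by auto
qed

lemma AG_eval2:
  assumes pT: "\<forall>k\<in>{1..K}. dpmf K a k > 0" and K: "1 \<le> K"
    and t: "t < K" "1 \<le> t" and eq: "\<forall>j\<in>{1..t-1}. dsurv K thT j = dsurv K a j"
  shows "AG K a b t thT = dcdf K b (t-1) + dpmf K b t * dsurv K a t * (1 / dsurv K thT t)"
proof -
  obtain m where m: "t = Suc m" using t by (cases t) auto
  have "AG K a b t thT = (\<Sum>j=1..m. dpmf K b j * (\<Sum>i=j+1..K. dpmf K a i) * (1/dsurv K thT j))
      + dpmf K b t * (\<Sum>i=t+1..K. dpmf K a i) * (1/dsurv K thT t)"
    unfolding AG_def m by simp
  also have "(\<Sum>j=1..m. dpmf K b j * (\<Sum>i=j+1..K. dpmf K a i) * (1/dsurv K thT j)) = dcdf K b m"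
    unfolding dcdf_def
  proof (intro sum.cong refl)
    fix j assume j: "j \<in> {1..m}"
    then have "dsurv K a j > 0" using pos_surv[OF pT] t m by auto
    then show "dpmf K b j * sum (dpmf K a) {j+1..K} * (1 / dsurv K thT j) = dpmf K b j"
      using j t m eq T1[of j K a] K by auto
  qed
  finally show ?thesis using T1[of t K a] t K m by simp
qed

theorem proposition2:
  fixes K :: nat and thsT thsC :: "nat \<Rightarrow> real"
  assumes "K \<ge> 1"
    and "\<forall>t\<in>{1..K}. dpmf K thsT t > 0"
    and "\<forall>t\<in>{1..K}. dpmf K thsC t > 0"
  shows "stationary K thsT thsC thsT thsC
       \<and> (\<forall>thT thC. valid_param K thT \<and> valid_param K thC \<and> stationary K thsT thsC thT thC
            \<longrightarrow> (\<forall>t\<in>{1..K-1}. thT t = thsT t \<and> thC t = thsC t))"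
proof
  note K = assms(1) and pT = assms(2) and pC = assms(3)
  show "stationary K thsT thsC thsT thsC"
    unfolding stat_iff[OF K]
  proof
    fix t assume t: "t \<in> {1..K-1}"
    then have t1: "1 \<le> t" "t < K" "t \<le> K" using K by auto
    have "AF K thsT thsC t thsC = dcdf K thsT t" by (rule AF_eval[OF pT pC t1(3)]) simp
    moreover have "AG K thsT thsC t thsT = dcdf K thsC t" by (rule AG_eval[OF pT K t1(2)]) simp
    moreover have "BF K thsT thsC t thsC = dsurv K thsT t"
      using BF_eval[OF K t1(3)] pos_surv[OF pC t1(2)] by simp
    moreover have "BG K thsT thsC t thsT = dsurv K thsC t"
      using BG_eval[OF K t1(3)] pos_surv[OF pT t1(2)] by simp
    ultimately show "dsurv K thsT t * AF K thsT thsC t thsC = dcdf K thsT t * BF K thsT thsC t thsC \<and>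
         dsurv K thsC t * AG K thsT thsC t thsT = dcdf K thsC t * BG K thsT thsC t thsT"
      by simp
  qed
next
  note K = assms(1) and pT = assms(2) and pC = assms(3)
  show "\<forall>thT thC. valid_param K thT \<and> valid_param K thC \<and> stationary K thsT thsC thT thC
            \<longrightarrow> (\<forall>t\<in>{1..K-1}. thT t = thsT t \<and> thC t = thsC t)"
  proof (intro allI impI)
    fix thT thC assume h: "valid_param K thT \<and> valid_param K thC \<and> stationary K thsT thsC thT thC"
    have vT: "\<forall>k\<in>{1..K}. dpmf K thT k > 0" and vC: "\<forall>k\<in>{1..K}. dpmf K thC k > 0"
      using h unfolding valid_param_def by auto
    have st: "\<forall>t\<in>{1..K-1}. dsurv K thT t * AF K thsT thsC t thC = dcdf K thT t * BF K thsT thsC t thC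
       \<and> dsurv K thC t * AG K thsT thsC t thT = dcdf K thC t * BG K thsT thsC t thT"
      using h stat_iff[OF K] by blast
    have claim: "t \<le> K-1 \<longrightarrow> dcdf K thT t = dcdf K thsT t \<and> dcdf K thC t = dcdf K thsC t" for t
    proof (induction t rule: less_induct)
      case (less t)
      show ?case
      proof (cases "t = 0")
        case True then show ?thesis by (simp add: dcdf_def)
      next
        case False
        show ?thesis
        proof
          assume tK: "t \<le> K - 1"
          have t1: "1 \<le> t" "t < K" "t \<le> K" using tK K False by auto
          have IH: "dcdf K thT s = dcdf K thsT s \<and> dcdf K thC s = dcdf K thsC s" if "s < t" for s
            using less that tK by auto
          have eqC: "\<forall>i\<in>{1..t}. dsurv_minus K thC i = dsurv_minus K thsC i"
            using IH unfolding dsurv_minus_def by (metis atLeastAtMost_iff diff_less less_le_trans zero_less_one)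
          have eqT: "\<forall>j\<in>{1..t-1}. dsurv K thT j = dsurv K thsT j"
            using IH t1 unfolding dsurv_def by auto
          have AFe: "AF K thsT thsC t thC = dcdf K thsT t" by (rule AF_eval[OF pT pC t1(3) eqC])
          have AGe: "AG K thsT thsC t thT = dcdf K thsC (t-1) + dpmf K thsC t * dsurv K thsT t * (1 / dsurv K thT t)"
            by (rule AG_eval2[OF pT K t1(2,1) eqT])
          have s: "dsurv K thT t * AF K thsT thsC t thC = dcdf K thT t * BF K thsT thsC t thC
             \<and> dsurv K thC t * AG K thsT thsC t thT = dcdf K thC t * BG K thsT thsC t thT"
            using st t1 by auto
          define x where "x = dsurv K thT t"
          define y where "y = dsurv K thC t"
          define f where "f = dsurv K thsT t"
          define g where "g = dsurv K thsC t"
          define gam where "gam = dcdf K thsC (t-1)"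
          define c where "c = dpmf K thsC t"
          have xp: "x > 0" unfolding x_def by (rule pos_surv[OF vT t1(2)])
          have yp: "y > 0" unfolding y_def by (rule pos_surv[OF vC t1(2)])
          have fp: "f > 0" unfolding f_def by (rule pos_surv[OF pT t1(2)])
          have gp: "g > 0" unfolding g_def by (rule pos_surv[OF pC t1(2)])
          have cp: "c > 0" unfolding c_def using pC t1 by auto
          have "dcdf K thsT t > 0" unfolding dcdf_def using pT t1 by (auto intro!: sum_pos)
          then have f1: "f < 1" unfolding f_def dsurv_def by simp
          have g0: "gam \<ge> 0" unfolding gam_def dcdf_def using pT pC t1
            by (intro sum_nonneg) (smt (verit) atLeastAtMost_iff diff_le_self le_trans)
          have sum1: "gam + c + g = 1" unfolding gam_def c_def g_def dsurv_def
            using dcdf_diff[OF t1(1), of K thsC] by simp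
          have e1: "x * (1-f) = (1-x) * (1/y * f * g)"
            using s AFe BF_eval[OF K t1(3)] unfolding x_def y_def f_def g_def dsurv_def by simp
          have e2: "y * (gam + c * f * (1/x)) = (1-y) * (1/x * f * g)"
            using s AGe BG_eval[OF K t1(3)] unfolding x_def y_def f_def g_def gam_def c_def dsurv_def by simp
          have "x = f \<and> y = g" by (rule alg[OF xp yp fp gp f1 g0 cp sum1 e1 e2])
          then show "dcdf K thT t = dcdf K thsT t \<and> dcdf K thC t = dcdf K thsC t"
            unfolding x_def y_def f_def g_def dsurv_def by simp
        qed
      qed
    qed
    show "\<forall>t\<in>{1..K-1}. thT t = thsT t \<and> thC t = thsC t"
    proof
      fix t assume t: "t \<in> {1..K-1}"
      then have t1: "1 \<le> t" "t < K" using K by auto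
      have a: "thT t = dcdf K thT t - dcdf K thT (t-1)" "thsT t = dcdf K thsT t - dcdf K thsT (t-1)"
        "thC t = dcdf K thC t - dcdf K thC (t-1)" "thsC t = dcdf K thsC t - dcdf K thsC (t-1)"
        using dcdf_diff[OF t1(1)] t1 by (auto simp: dpmf_def)
      show "thT t = thsT t \<and> thC t = thsC t"
        unfolding a using claim[of t] claim[of "t-1"] t by auto
    qed
  qed
qed

end
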